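(* Consider a single-antenna jammer ($I=1$) with a fixed (deterministic) transmit vector $\mathbf w_D\in\mathbb C^D$, so $\mathbf W_D=\mathbf w_D^{\mathrm T}$, and let $\mathbf S_D$ be uniformly distributed on $\mathcal S^{U\times D}$. Then the probability (over $\mathbf S_D$) that the jammer is eclipsed (with perfect CSI) is at most $$p_e(\mathbf w_D)=\begin{cases}1 & \text{if } \mathbf w_D=\mathbf 0,\\[2pt] 1-\Big(1-\dfrac{2^{\|\mathbf w_D\|_0}-1}{4^{\|\mathbf w_D\|_0-1}}\Big)^U & \text{otherwise,}\end{cases}$$ where $\|\mathbf w_D\|_0$ is the number of nonzero entries of $\mathbf w_D$.
   Context: Let $U,D$ be positive integers and $\mathcal S=\{(\pm1\pm i)/\sqrt2\}\subset\mathbb C$ (QPSK). Eclipsing with perfect CSI (single-antenna case): given $\mathbf S_D\in\mathcal S^{U\times D}$ and $\mathbf w_D\in\mathbb C^D$, the jammer is eclipsed if there exists $\tilde{\mathbf S}_D\in\mathcal S^{U\times D}\setminus\{\mathbf S_D\}$ such that the $(U+1)\times D$ matrix $\begin{bmatrix}\mathbf S_D-\tilde{\mathbf S}_D\\ \mathbf w_D^{\mathrm T}\end{bmatrix}$ has rank at most $1$. *)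

theory Defs
  imports "HOL-Analysis.Analysis"
begin

definition QPSK :: "complex set" where
  "QPSK = {(complex_of_real a + \<i> * complex_of_real b) / complex_of_real (sqrt 2) |
             a b. a \<in> {-1, 1} \<and> b \<in> {-1, 1}}"

definition QPSK_matrices :: "(complex^'d^'u) set" where
  "QPSK_matrices = {S. \<forall>u d. S $ u $ d \<in> QPSK}"

text \<open>The (U+1) x D matrix stacking S - S' on top of the row w^T
  (the extra row is indexed by None).\<close>
definition stack_row :: "complex^'d^'u \<Rightarrow> complex^'d \<Rightarrow> complex^'d^('u option)" where
  "stack_row M w = (\<chi> r. case r of None \<Rightarrow> w | Some u \<Rightarrow> M $ u)"

definition eclipsed :: "complex^'d^'u \<Rightarrow> complex^'d \<Rightarrow> bool" where
  "eclipsed S w \<longleftrightarrow>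
     (\<exists>S' \<in> QPSK_matrices - {S}. rank (stack_row (S - S') w) \<le> 1)"

definition l0 :: "complex^'d \<Rightarrow> nat" where
  "l0 w = card {i. w $ i \<noteq> 0}"

definition p_e :: "nat \<Rightarrow> complex^'d \<Rightarrow> real" where
  "p_e U w = (if w = 0 then 1
     else 1 - (1 - (2 ^ l0 w - 1) / 4 ^ (l0 w - 1)) ^ U)"

end

theory Submission imports Defs begin


definition pp :: real where "pp = 1 / sqrt 2"

lemma pp_pos: "pp > 0" by (simp add: pp_def)
lemma pp_sq: "pp * pp = 1/2"
  by (simp add: pp_def)

lemma QPSK_iff: "q \<in> QPSK \<longleftrightarrow> (Re q = pp \<or> Re q = - pp) \<and> (Im q = pp \<or> Im q = - pp)"
proof
  assume "q \<in> QPSK"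
  then obtain a b where q: "q = (complex_of_real a + \<i> * complex_of_real b) / complex_of_real (sqrt 2)"
    and ab: "a \<in> {-1, 1}" "b \<in> {-1, 1}" unfolding QPSK_def by blast
  have q2: "q = (complex_of_real a + \<i> * complex_of_real b) * complex_of_real pp"
    unfolding q pp_def by (simp add: divide_inverse)
  have "Re q = a * pp" "Im q = b * pp" unfolding q2 by simp_all
  thus "(Re q = pp \<or> Re q = - pp) \<and> (Im q = pp \<or> Im q = - pp)" using ab by auto
next
  assume h: "(Re q = pp \<or> Re q = - pp) \<and> (Im q = pp \<or> Im q = - pp)"
  define a where "a = Re q / pp"
  define b where "b = Im q / pp"
  have ab: "a \<in> {-1, 1}" "b \<in> {-1, 1}" using h pp_pos by (auto simp: a_def b_def)
  have ps: "pp * sqrt 2 = 1" by (simp add: pp_def)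
  have "q = (complex_of_real a + \<i> * complex_of_real b) / complex_of_real (sqrt 2)"
    using pp_pos ps by (simp add: complex_eq_iff a_def b_def Re_divide Im_divide field_simps)
  thus "q \<in> QPSK" using ab unfolding QPSK_def by blast
qed



definition UU :: "complex set" where "UU = {1, \<i>, -1, -\<i>}"

lemma QPSK_eq: "QPSK = {Complex pp pp, Complex pp (-pp), Complex (-pp) pp, Complex (-pp) (-pp)}"
  by (auto simp: QPSK_iff complex_eq_iff)

lemma pp_neq: "pp \<noteq> - pp" using pp_pos by simp

lemma finite_QPSK: "finite QPSK" by (simp add: QPSK_eq)
lemma card_QPSK: "card QPSK = 4"
  using pp_pos by (simp add: QPSK_eq complex_eq_iff)

lemma half_Re: "q \<in> QPSK \<Longrightarrow> q' \<in> QPSK \<Longrightarrow> Re q \<noteq> Re q' \<Longrightarrow> Re q = Re (q - q') / 2"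
  by (auto simp: QPSK_iff)
lemma half_Im: "q \<in> QPSK \<Longrightarrow> q' \<in> QPSK \<Longrightarrow> Im q \<noteq> Im q' \<Longrightarrow> Im q = Im (q - q') / 2"
  by (auto simp: QPSK_iff)

lemma UU_mult_QPSK: "u \<in> UU \<Longrightarrow> (z * u \<in> QPSK) = (z \<in> QPSK)"
  by (auto simp: UU_def QPSK_iff)

lemma UU_nz: "u \<in> UU \<Longrightarrow> u \<noteq> 0" by (auto simp: UU_def)
lemma UU_inv: "u \<in> UU \<Longrightarrow> 1 / u \<in> UU" by (auto simp: UU_def)
lemma UU_div: "u \<in> UU \<Longrightarrow> v \<in> UU \<Longrightarrow> v / u \<in> UU" by (auto simp: UU_def)
lemma UU_div_QPSK: "u \<in> UU \<Longrightarrow> (z / u \<in> QPSK) = (z \<in> QPSK)"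
  using UU_mult_QPSK[OF UU_inv, of u z] by simp
lemma finite_UU: "finite UU" by (simp add: UU_def)
lemma card_UU: "card UU = 4" by (simp add: UU_def complex_eq_iff)

definition S4 :: "complex set" where "S4 = (\<lambda>u. complex_of_real (2*pp) * u) ` UU"
definition D4 :: "complex set" where "D4 = (\<lambda>u. complex_of_real (2*pp) * (1 + \<i>) * u) ` UU"

lemma S4I: "u \<in> UU \<Longrightarrow> v = complex_of_real (2*pp) * u \<Longrightarrow> v \<in> S4"
  by (auto simp: S4_def)
lemma D4I: "u \<in> UU \<Longrightarrow> v = complex_of_real (2*pp) * (1 + \<i>) * u \<Longrightarrow> v \<in> D4"
  by (auto simp: D4_def)

lemma diff_class:
  assumes "q \<in> QPSK" "q' \<in> QPSK" "q \<noteq> q'"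
  shows "q - q' \<in> S4 \<union> D4"
proof -
  have h: "Re q = pp \<or> Re q = - pp" "Im q = pp \<or> Im q = - pp"
       "Re q' = pp \<or> Re q' = - pp" "Im q' = pp \<or> Im q' = - pp"
    using assms by (auto simp: QPSK_iff)
  define a where "a = Re q - Re q'"
  define b where "b = Im q - Im q'"
  have v: "q - q' = Complex a b" by (simp add: a_def b_def complex_eq_iff)
  have a: "a = 0 \<or> a = 2*pp \<or> a = -2*pp" and b: "b = 0 \<or> b = 2*pp \<or> b = -2*pp"
    using h by (auto simp: a_def b_def)
  have nz: "\<not> (a = 0 \<and> b = 0)" using assms(3) by (auto simp: a_def b_def complex_eq_iff)
  have U: "1 \<in> UU" "\<i> \<in> UU" "-1 \<in> UU" "-\<i> \<in> UU" by (auto simp: UU_def)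
  show ?thesis unfolding v
  proof (cases "a = 0")
    case True
    then have "b = 2*pp \<or> b = -2*pp" using b nz by auto
    thus "Complex a b \<in> S4 \<union> D4"
    proof
      assume "b = 2*pp" thus ?thesis using True S4I[OF U(2)] by (simp add: complex_eq_iff)
    next
      assume "b = -2*pp" thus ?thesis using True S4I[OF U(4)] by (simp add: complex_eq_iff)
    qed
  next
    case aF: False
    then have a2: "a = 2*pp \<or> a = -2*pp" using a by auto
    show "Complex a b \<in> S4 \<union> D4"
    proof (cases "b = 0")
      case True
      from a2 show ?thesis
      proof
        assume "a = 2*pp" thus ?thesis using True S4I[OF U(1)] by (simp add: complex_eq_iff)
      next
        assume "a = -2*pp" thus ?thesis using True S4I[OF U(3)] by (simp add: complex_eq_iff)
      qed
    next
      case False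
      then have b2: "b = 2*pp \<or> b = -2*pp" using b by auto
      from a2 b2 show ?thesis
      proof (elim disjE)
        assume "a = 2*pp" "b = 2*pp" thus ?thesis using D4I[OF U(1)] by (simp add: complex_eq_iff)
      next
        assume "a = 2*pp" "b = -2*pp" thus ?thesis using D4I[OF U(4)] by (simp add: complex_eq_iff)
      next
        assume "a = -2*pp" "b = 2*pp" thus ?thesis using D4I[OF U(2)] by (simp add: complex_eq_iff)
      next
        assume "a = -2*pp" "b = -2*pp" thus ?thesis using D4I[OF U(3)] by (simp add: complex_eq_iff)
      qed
    qed
  qed
qed

lemma UU_norm: "u \<in> UU \<Longrightarrow> cmod u = 1" by (auto simp: UU_def)
lemma D4_nsq: "v \<in> D4 \<Longrightarrow> (cmod v)^2 = 4"
proof -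
  assume "v \<in> D4"
  then obtain u where u: "u \<in> UU" "v = complex_of_real (2*pp) * (1 + \<i>) * u" by (auto simp: D4_def)
  have "(cmod v)^2 = (2*pp)^2 * (cmod (1 + \<i>))^2 * (cmod u)^2" using u pp_pos
    by (simp add: norm_mult power_mult_distrib)
  also have "\<dots> = 4" using UU_norm[OF u(1)] pp_sq by (simp add: cmod_def power2_eq_square)
  finally show ?thesis .
qed
lemma S4_nsq: "v \<in> S4 \<Longrightarrow> (cmod v)^2 = 2"
proof -
  assume "v \<in> S4"
  then obtain u where u: "u \<in> UU" "v = complex_of_real (2*pp) * u" by (auto simp: S4_def)
  have "(cmod v)^2 = (2*pp)^2 * (cmod u)^2" using u pp_pos
    by (simp add: norm_mult power_mult_distrib)
  also have "\<dots> = 2" using UU_norm[OF u(1)] pp_sq by (simp add: power2_eq_square)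
  finally show ?thesis .
qed
lemma D4_ReIm: "v \<in> D4 \<Longrightarrow> Re v \<noteq> 0 \<and> Im v \<noteq> 0"
  using pp_pos by (auto simp: D4_def UU_def)
lemma S4_ratio: "d \<in> S4 \<Longrightarrow> d * r \<in> S4 \<Longrightarrow> r \<in> UU"
proof -
  assume "d \<in> S4" "d * r \<in> S4"
  then obtain u v where u: "u \<in> UU" "d = complex_of_real (2*pp) * u" and v: "v \<in> UU" "d * r = complex_of_real (2*pp) * v"
    unfolding S4_def by blast
  have "r = v / u" using u v pp_pos UU_nz[OF u(1)] by (auto simp: field_simps)
  thus ?thesis using UU_div u v by simp
qed
lemma S4_nz: "v \<in> S4 \<Longrightarrow> v \<noteq> 0" using S4_nsq by force
lemma D4_nz: "v \<in> D4 \<Longrightarrow> v \<noteq> 0" using D4_nsq by force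
lemma finite_S4: "finite S4" and finite_D4: "finite D4" by (simp_all add: S4_def D4_def finite_UU)
lemma card_S4: "card S4 \<le> 4" and card_D4: "card D4 \<le> 4"
  unfolding S4_def D4_def using card_UU card_image_le finite_UU by metis+

lemma card_le2: "A \<subseteq> {a,b} \<Longrightarrow> card A \<le> 2"
proof -
  assume "A \<subseteq> {a,b}"
  hence "card A \<le> card {a,b}" by (intro card_mono) auto
  also have "\<dots> \<le> 2" by (cases "a = b") auto
  finally show ?thesis .
qed
lemma card_le1: "A \<subseteq> {a} \<Longrightarrow> card A \<le> 1"
proof -
  assume "A \<subseteq> {a}"
  hence "card A \<le> card {a}" by (intro card_mono) auto
  thus ?thesis by simp
qed

lemma cnt2: assumes "v \<noteq> 0" shows "card {q\<in>QPSK. q - v \<in> QPSK} \<le> 2"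
proof (cases "Re v = 0")
  case False
  have "{q\<in>QPSK. q - v \<in> QPSK} \<subseteq> {Complex (Re v / 2) pp, Complex (Re v / 2) (-pp)}"
  proof
    fix q assume q: "q \<in> {q\<in>QPSK. q - v \<in> QPSK}"
    hence "Re q = Re (q - (q - v)) / 2" using False by (intro half_Re) auto
    thus "q \<in> {Complex (Re v / 2) pp, Complex (Re v / 2) (-pp)}" using q by (auto simp: QPSK_iff complex_eq_iff)
  qed
  thus ?thesis by (rule card_le2)
next
  case True
  hence I: "Im v \<noteq> 0" using assms complex_eq_iff by force
  have "{q\<in>QPSK. q - v \<in> QPSK} \<subseteq> {Complex pp (Im v / 2), Complex (-pp) (Im v / 2)}"
  proof
    fix q assume q: "q \<in> {q\<in>QPSK. q - v \<in> QPSK}"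
    hence "Im q = Im (q - (q - v)) / 2" using I by (intro half_Im) auto
    thus "q \<in> {Complex pp (Im v / 2), Complex (-pp) (Im v / 2)}" using q by (auto simp: QPSK_iff complex_eq_iff)
  qed
  thus ?thesis by (rule card_le2)
qed

lemma cnt1: assumes "Re v \<noteq> 0" "Im v \<noteq> 0" shows "card {q\<in>QPSK. q - v \<in> QPSK} \<le> 1"
proof -
  have "{q\<in>QPSK. q - v \<in> QPSK} \<subseteq> {Complex (Re v / 2) (Im v / 2)}"
  proof
    fix q assume q: "q \<in> {q\<in>QPSK. q - v \<in> QPSK}"
    hence "Re q = Re (q - (q - v)) / 2" "Im q = Im (q - (q - v)) / 2" using assms
      by (intro half_Re half_Im; auto)+
    thus "q \<in> {Complex (Re v / 2) (Im v / 2)}" by (simp add: complex_eq_iff)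
  qed
  thus ?thesis by (rule card_le1)
qed



lemma rank_le1_row:
  fixes M :: "complex^'d^'u"
  assumes w: "w \<noteq> 0" and r: "rank (stack_row M w) \<le> 1"
  shows "\<exists>c. M$u = c *s w"
proof (rule ccontr)
  assume nc: "\<not> (\<exists>c. M$u = c *s w)"
  have ns: "M$u \<notin> vec.span {w}" using nc by (auto simp: vec.span_singleton)
  have ind: "vec.independent {M$u, w}"
    using vec.independent_insertI[OF ns] w by simp
  have neq: "M$u \<noteq> w"
  proof
    assume "M$u = w"
    hence "M$u = 1 *s w" by simp
    thus False using nc by blast
  qed
  have rw: "row None (stack_row M w) = w" "row (Some u) (stack_row M w) = M$u"
    by (simp_all add: row_def stack_row_def vec_eq_iff)
  have sub: "{M$u, w} \<subseteq> rows (stack_row M w)"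
  proof -
    have "row None (stack_row M w) \<in> rows (stack_row M w)" "row (Some u) (stack_row M w) \<in> rows (stack_row M w)"
      unfolding rows_def by blast+
    thus ?thesis using rw by simp
  qed
  have "card {M$u, w} \<le> vec.dim (rows (stack_row M w))"
    by (rule vec.independent_card_le_dim[OF sub ind])
  hence "2 \<le> rank (stack_row M w)" using neq by (simp add: row_rank_def_gen)
  thus False using r by simp
qed

lemma card_vec_set:
  fixes F :: "'n::finite \<Rightarrow> 'a set"
  assumes "\<And>i. finite (F i)"
  shows "finite {x::'a^'n. \<forall>i. x$i \<in> F i} \<and> card {x::'a^'n. \<forall>i. x$i \<in> F i} = (\<Prod>i\<in>UNIV. card (F i))"
proof -
  have eq: "vec_nth ` {x::'a^'n. \<forall>i. x$i \<in> F i} = PiE UNIV F"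
  proof
    show "vec_nth ` {x::'a^'n. \<forall>i. x$i \<in> F i} \<subseteq> PiE UNIV F" by auto
    show "PiE UNIV F \<subseteq> vec_nth ` {x::'a^'n. \<forall>i. x$i \<in> F i}"
    proof
      fix f assume "f \<in> PiE UNIV F"
      hence "f = vec_nth (vec_lambda f)" "vec_lambda f \<in> {x::'a^'n. \<forall>i. x$i \<in> F i}" by auto
      thus "f \<in> vec_nth ` {x::'a^'n. \<forall>i. x$i \<in> F i}" by blast
    qed
  qed
  have inj: "inj_on vec_nth {x::'a^'n. \<forall>i. x$i \<in> F i}" by (simp add: inj_on_def vec_eq_iff)
  have "finite (PiE UNIV F)" using assms by (intro finite_PiE) auto
  hence f: "finite {x::'a^'n. \<forall>i. x$i \<in> F i}" using eq inj by (metis finite_image_iff)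
  have "card {x::'a^'n. \<forall>i. x$i \<in> F i} = card (PiE UNIV F)" using eq inj by (metis card_image)
  also have "\<dots> = (\<Prod>i\<in>UNIV. card (F i))" by (simp add: card_PiE)
  finally show ?thesis using f by simp
qed


definition QR :: "(complex^'d) set" where "QR = {r. \<forall>j. r$j \<in> QPSK}"
definition badrow :: "complex^'d \<Rightarrow> complex^'d \<Rightarrow> bool" where
  "badrow w r \<longleftrightarrow> (\<exists>r'\<in>QR. r' \<noteq> r \<and> (\<exists>c. r - r' = c *s w))"

lemma prod_if_supp:
  fixes w :: "complex^'d"
  shows "(\<Prod>j\<in>UNIV. if w$j = 0 then a else b) = a^(CARD('d) - l0 w) * (b::nat)^(l0 w)"
proof -
  have "(\<Prod>j\<in>UNIV. if w$j = 0 then a else b) = prod (\<lambda>_. a) (UNIV \<inter> {j. w$j = 0}) * prod (\<lambda>_. b) (UNIV \<inter> - {j. w$j = 0})"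
    by (rule prod.If_cases) simp
  moreover have "UNIV \<inter> - {j. w$j = 0} = {j. w$j \<noteq> 0}" by auto
  moreover have "UNIV \<inter> {j. w$j = 0} = UNIV - {j. w$j \<noteq> 0}" by auto
  moreover have "card (UNIV - {j. w$j \<noteq> 0}) = CARD('d) - l0 w"
    unfolding l0_def by (simp add: card_Diff_subset)
  ultimately show ?thesis by (simp add: l0_def)
qed

lemma cardRe:
  assumes u: "u \<in> UU" and x: "x = pp \<or> x = -pp"
  shows "card {q\<in>QPSK. Re (q / u) = x} = 2"
proof -
  have eq: "{q\<in>QPSK. Re (q / u) = x} = (\<lambda>z. z * u) ` {Complex x pp, Complex x (-pp)}"
  proof
    show "{q\<in>QPSK. Re (q / u) = x} \<subseteq> (\<lambda>z. z * u) ` {Complex x pp, Complex x (-pp)}"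
    proof
      fix q assume q: "q \<in> {q\<in>QPSK. Re (q / u) = x}"
      hence "q / u \<in> QPSK" using UU_div_QPSK[OF u] by auto
      hence "q / u \<in> {Complex x pp, Complex x (-pp)}" using q by (auto simp: QPSK_iff complex_eq_iff)
      moreover have "q = (q / u) * u" using UU_nz[OF u] by simp
      ultimately show "q \<in> (\<lambda>z. z * u) ` {Complex x pp, Complex x (-pp)}" by blast
    qed
    show "(\<lambda>z. z * u) ` {Complex x pp, Complex x (-pp)} \<subseteq> {q\<in>QPSK. Re (q / u) = x}"
    proof
      fix q assume "q \<in> (\<lambda>z. z * u) ` {Complex x pp, Complex x (-pp)}"
      then obtain z where z: "z \<in> {Complex x pp, Complex x (-pp)}" "q = z * u" by blast
      have "z \<in> QPSK" using z(1) x by (auto simp: QPSK_iff)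
      hence "q \<in> QPSK" using UU_mult_QPSK[OF u] z(2) by simp
      moreover have "q / u = z" using z(2) UU_nz[OF u] by simp
      ultimately show "q \<in> {q\<in>QPSK. Re (q / u) = x}" using z(1) by auto
    qed
  qed
  have "inj_on (\<lambda>z. z * u) {Complex x pp, Complex x (-pp)}" using UU_nz[OF u] by (auto simp: inj_on_def)
  hence "card {q\<in>QPSK. Re (q / u) = x} = card {Complex x pp, Complex x (-pp)}" using eq card_image by metis
  thus ?thesis using pp_pos by simp
qed

lemma cardIm:
  assumes u: "u \<in> UU" and x: "x = pp \<or> x = -pp"
  shows "card {q\<in>QPSK. Im (q / u) = x} = 2"
proof -
  have eq: "{q\<in>QPSK. Im (q / u) = x} = (\<lambda>z. z * u) ` {Complex pp x, Complex (-pp) x}"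
  proof
    show "{q\<in>QPSK. Im (q / u) = x} \<subseteq> (\<lambda>z. z * u) ` {Complex pp x, Complex (-pp) x}"
    proof
      fix q assume q: "q \<in> {q\<in>QPSK. Im (q / u) = x}"
      hence "q / u \<in> QPSK" using UU_div_QPSK[OF u] by auto
      hence "q / u \<in> {Complex pp x, Complex (-pp) x}" using q by (auto simp: QPSK_iff complex_eq_iff)
      moreover have "q = (q / u) * u" using UU_nz[OF u] by simp
      ultimately show "q \<in> (\<lambda>z. z * u) ` {Complex pp x, Complex (-pp) x}" by blast
    qed
    show "(\<lambda>z. z * u) ` {Complex pp x, Complex (-pp) x} \<subseteq> {q\<in>QPSK. Im (q / u) = x}"
    proof
      fix q assume "q \<in> (\<lambda>z. z * u) ` {Complex pp x, Complex (-pp) x}"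
      then obtain z where z: "z \<in> {Complex pp x, Complex (-pp) x}" "q = z * u" by blast
      have "z \<in> QPSK" using z(1) x by (auto simp: QPSK_iff)
      hence "q \<in> QPSK" using UU_mult_QPSK[OF u] z(2) by simp
      moreover have "q / u = z" using z(2) UU_nz[OF u] by simp
      ultimately show "q \<in> {q\<in>QPSK. Im (q / u) = x}" using z(1) by auto
    qed
  qed
  have "inj_on (\<lambda>z. z * u) {Complex pp x, Complex (-pp) x}" using UU_nz[OF u] by (auto simp: inj_on_def)
  hence "card {q\<in>QPSK. Im (q / u) = x} = card {Complex pp x, Complex (-pp) x}" using eq card_image by metis
  thus ?thesis using pp_pos by simp
qed

lemma cardReIm:
  assumes u: "u \<in> UU" and x: "x = pp \<or> x = -pp" and y: "y = pp \<or> y = -pp"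
  shows "card ({q\<in>QPSK. Re (q / u) = x} \<inter> {q\<in>QPSK. Im (q / u) = y}) = 1"
proof -
  have eq: "{q\<in>QPSK. Re (q / u) = x} \<inter> {q\<in>QPSK. Im (q / u) = y} = {Complex x y * u}"
  proof
    show "{q\<in>QPSK. Re (q / u) = x} \<inter> {q\<in>QPSK. Im (q / u) = y} \<subseteq> {Complex x y * u}"
    proof
      fix q assume q: "q \<in> {q\<in>QPSK. Re (q / u) = x} \<inter> {q\<in>QPSK. Im (q / u) = y}"
      hence "q / u = Complex x y" by (simp add: complex_eq_iff)
      moreover have "q = (q / u) * u" using UU_nz[OF u] by simp
      ultimately show "q \<in> {Complex x y * u}" by simp
    qed
    have "Complex x y \<in> QPSK" using x y by (auto simp: QPSK_iff)
    hence "Complex x y * u \<in> QPSK" using UU_mult_QPSK[OF u] by simp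
    moreover have "Complex x y * u / u = Complex x y" using UU_nz[OF u] by simp
    ultimately show "{Complex x y * u} \<subseteq> {q\<in>QPSK. Re (q / u) = x} \<inter> {q\<in>QPSK. Im (q / u) = y}"
      by simp
  qed
  thus ?thesis by simp
qed

lemma finite_QR: "finite (QR :: (complex^'d) set)"
  using card_vec_set[of "\<lambda>_::'d. QPSK"] finite_QPSK unfolding QR_def by blast

lemma card_QR: "card (QR :: (complex^'d) set) = 4 ^ CARD('d)"
  using card_vec_set[of "\<lambda>_::'d. QPSK"] finite_QPSK card_QPSK unfolding QR_def by simp

lemma bad_char:
  fixes w r :: "complex^'d"
  assumes "badrow w r" "w$j0 \<noteq> 0" "r \<in> QR"
  obtains r' c where "r' \<in> QR" "c * w$j0 \<in> S4 \<union> D4"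
    "\<forall>j. r$j - r'$j = (c * w$j0) * (w$j / w$j0)"
proof -
  from assms obtain r' c where r': "r' \<in> QR" "r' \<noteq> r" "r - r' = c *s w" by (auto simp: badrow_def)
  have comp: "\<forall>j. r$j - r'$j = c * w$j" using r'(3) by (metis vector_minus_component vector_smult_component)
  have c: "c \<noteq> 0"
  proof
    assume "c = 0"
    hence "r = r'" using comp by (simp add: vec_eq_iff)
    thus False using r'(2) by simp
  qed
  have "r$j0 - r'$j0 \<noteq> 0" using comp c assms(2) by simp
  hence "r$j0 \<noteq> r'$j0" by simp
  hence "r$j0 - r'$j0 \<in> S4 \<union> D4" using assms(3) r'(1) by (intro diff_class) (auto simp: QR_def)
  hence "c * w$j0 \<in> S4 \<union> D4" using comp by simp
  moreover have "\<forall>j. r$j - r'$j = (c * w$j0) * (w$j / w$j0)" using comp assms(2) by simp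
  ultimately show ?thesis using that r'(1) by blast
qed

lemma sum_bound_helper:
  fixes Bad :: "'a set" and T :: "complex \<Rightarrow> 'a set"
  assumes "Bad \<subseteq> (\<Union>\<delta>\<in>E. T \<delta>)" "finite E" "card E \<le> 4" "\<And>\<delta>. \<delta> \<in> E \<Longrightarrow> finite (T \<delta>)"
    "\<And>\<delta>. \<delta> \<in> E \<Longrightarrow> 2 * card (T \<delta>) \<le> K"
  shows "2 * card Bad \<le> 4 * K"
proof -
  have "card Bad \<le> card (\<Union>\<delta>\<in>E. T \<delta>)" using assms by (intro card_mono) auto
  also have "\<dots> \<le> (\<Sum>\<delta>\<in>E. card (T \<delta>))" using assms(2) by (rule card_UN_le)
  finally have "2 * card Bad \<le> 2 * (\<Sum>\<delta>\<in>E. card (T \<delta>))" by simp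
  also have "\<dots> = (\<Sum>\<delta>\<in>E. 2 * card (T \<delta>))" by (simp add: sum_distrib_left)
  also have "\<dots> \<le> card E * K" using sum_bounded_above[of E "\<lambda>\<delta>. 2 * card (T \<delta>)" K] assms(5) by simp
  also have "\<dots> \<le> 4 * K" using assms(3) by simp
  finally show ?thesis .
qed

lemma row_bound:
  fixes w :: "complex^'d"
  assumes w: "w \<noteq> 0"
  shows "card {r\<in>QR. badrow w r} + 4 * 4^(CARD('d) - l0 w) \<le> 4 * 2^(l0 w) * 4^(CARD('d) - l0 w)"
proof -
  obtain j0 where j0: "w$j0 \<noteq> 0" using w by (metis vec_eq_iff zero_index)
  define \<rho> where "\<rho> j = w$j / w$j0" for j
  define k where "k = l0 w"
  define H where "H = (4::nat)^(CARD('d) - l0 w)"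
  have k1: "k \<ge> 1"
  proof -
    have "j0 \<in> {j. w$j \<noteq> 0}" using j0 by simp
    hence "card {j. w$j \<noteq> 0} \<noteq> 0" by auto
    thus ?thesis unfolding k_def l0_def by (metis One_nat_def Suc_leI neq0_conv)
  qed
  have \<rho>0: "\<rho> j0 = 1" using j0 by (simp add: \<rho>_def)
  have \<rho>z: "\<And>j. w$j = 0 \<Longrightarrow> \<rho> j = 0" by (simp add: \<rho>_def)
  have \<rho>nz: "\<And>j. w$j \<noteq> 0 \<Longrightarrow> \<rho> j \<noteq> 0" using j0 by (simp add: \<rho>_def)
  define Bad where "Bad = {r\<in>QR. badrow w r}"
  have finBad: "finite Bad" unfolding Bad_def by (rule finite_subset[OF _ finite_QR]) auto
  have p2: "(\<Prod>j\<in>UNIV. if w$j = 0 then 4 else 2) = H * 2^k"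
    using prod_if_supp[of w 4 2] by (simp add: H_def k_def)
  have p1: "(\<Prod>j\<in>UNIV. if w$j = 0 then 4 else 1) = H"
    using prod_if_supp[of w 4 1] by (simp add: H_def k_def)
  have "card Bad + 4 * H \<le> 4 * 2^k * H"
  proof (cases "\<forall>j. w$j \<noteq> 0 \<longrightarrow> \<rho> j \<in> UU")
    case True
    define FA where "FA x j = (if w$j = 0 then QPSK else {q\<in>QPSK. Re (q / \<rho> j) = x})" for x j
    define FB where "FB y j = (if w$j = 0 then QPSK else {q\<in>QPSK. Im (q / \<rho> j) = y})" for y j
    define A where "A x = {r::complex^'d. \<forall>j. r$j \<in> FA x j}" for x
    define B where "B y = {r::complex^'d. \<forall>j. r$j \<in> FB y j}" for y
    have finFA: "\<And>x j. finite (FA x j)" using finite_QPSK by (simp add: FA_def)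
    have finFB: "\<And>x j. finite (FB x j)" using finite_QPSK by (simp add: FB_def)
    have cA: "card (A x) = H * 2^k" and finA: "finite (A x)" if x: "x = pp \<or> x = -pp" for x
    proof -
      have "card (FA x j) = (if w$j = 0 then 4 else 2)" for j
        using cardRe[OF _ x, of "\<rho> j"] True card_QPSK by (simp add: FA_def)
      thus "card (A x) = H * 2^k" "finite (A x)"
        using card_vec_set[of "FA x", OF finFA] p2 unfolding A_def by simp_all
    qed
    have cB: "card (B x) = H * 2^k" and finB: "finite (B x)" if x: "x = pp \<or> x = -pp" for x
    proof -
      have "card (FB x j) = (if w$j = 0 then 4 else 2)" for j
        using cardIm[OF _ x, of "\<rho> j"] True card_QPSK by (simp add: FB_def)
      thus "card (B x) = H * 2^k" "finite (B x)"
        using card_vec_set[of "FB x", OF finFB] p2 unfolding B_def by simp_all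
    qed
    have cAB: "card (A x \<inter> B y) = H" if x: "x = pp \<or> x = -pp" and y: "y = pp \<or> y = -pp" for x y
    proof -
      have eq: "A x \<inter> B y = {r::complex^'d. \<forall>j. r$j \<in> FA x j \<inter> FB y j}" unfolding A_def B_def by auto
      have "card (FA x j \<inter> FB y j) = (if w$j = 0 then 4 else 1)" for j
        using cardReIm[OF _ x y, of "\<rho> j"] True card_QPSK by (simp add: FA_def FB_def)
      thus ?thesis using card_vec_set[of "\<lambda>j. FA x j \<inter> FB y j"] finFA p1 eq by simp
    qed
    have disjA: "A pp \<inter> A (-pp) = {}"
    proof (rule ccontr)
      assume "A pp \<inter> A (-pp) \<noteq> {}"
      then obtain r where "r \<in> A pp" "r \<in> A (-pp)" by blast
      hence "r$j0 \<in> FA pp j0" "r$j0 \<in> FA (-pp) j0" unfolding A_def by auto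
      thus False using j0 pp_neq by (simp add: FA_def)
    qed
    have disjB: "B pp \<inter> B (-pp) = {}"
    proof (rule ccontr)
      assume "B pp \<inter> B (-pp) \<noteq> {}"
      then obtain r where "r \<in> B pp" "r \<in> B (-pp)" by blast
      hence "r$j0 \<in> FB pp j0" "r$j0 \<in> FB (-pp) j0" unfolding B_def by auto
      thus False using j0 pp_neq by (simp add: FB_def)
    qed
    define X where "X = A pp \<union> A (-pp)"
    define Y where "Y = B pp \<union> B (-pp)"
    have sub: "Bad \<subseteq> X \<union> Y"
    proof
      fix r assume rB: "r \<in> Bad"
      hence rQ: "r \<in> QR" and rb: "badrow w r" by (auto simp: Bad_def)
      obtain r' c where r': "r' \<in> QR" and dS: "c * w$j0 \<in> S4 \<union> D4"
        and comp: "\<forall>j. r$j - r'$j = (c * w$j0) * (w$j / w$j0)"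
        using bad_char[OF rb j0 rQ] by blast
      define \<delta> where "\<delta> = c * w$j0"
      have dnz: "\<delta> \<noteq> 0" using dS S4_nz D4_nz unfolding \<delta>_def by blast
      have zj: "r$j / \<rho> j - r'$j / \<rho> j = \<delta>" if "w$j \<noteq> 0" for j
      proof -
        have "r$j - r'$j = \<delta> * \<rho> j" using comp by (simp add: \<delta>_def \<rho>_def)
        hence "(r$j - r'$j) / \<rho> j = \<delta>" using \<rho>nz[OF that] by simp
        thus ?thesis by (simp add: diff_divide_distrib)
      qed
      have inQ: "r$j / \<rho> j \<in> QPSK" "r'$j / \<rho> j \<in> QPSK" if "w$j \<noteq> 0" for j
        using UU_div_QPSK[of "\<rho> j"] True that rQ r' by (auto simp: QR_def)
      have rj: "r$j \<in> QPSK" for j using rQ by (simp add: QR_def)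
      show "r \<in> X \<union> Y"
      proof (cases "Re \<delta> = 0")
        case False
        have hj: "Re (r$j / \<rho> j) = Re \<delta> / 2" if "w$j \<noteq> 0" for j
        proof -
          have "Re (r$j / \<rho> j) \<noteq> Re (r'$j / \<rho> j)" using zj[OF that] False by (metis minus_complex.sel(1) right_minus_eq)
          hence "Re (r$j / \<rho> j) = Re (r$j / \<rho> j - r'$j / \<rho> j) / 2" using inQ[OF that] by (intro half_Re) auto
          thus ?thesis using zj[OF that] by simp
        qed
        have x: "Re \<delta> / 2 = pp \<or> Re \<delta> / 2 = -pp" using hj[OF j0] \<rho>0 rj[of j0] by (auto simp: QPSK_iff)
        have "r \<in> A (Re \<delta> / 2)" unfolding A_def FA_def using hj rj by auto
        thus ?thesis using x unfolding X_def by auto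
      next
        case True
        hence ImF: "Im \<delta> \<noteq> 0" using dnz complex_eq_iff by force
        have hj: "Im (r$j / \<rho> j) = Im \<delta> / 2" if "w$j \<noteq> 0" for j
        proof -
          have "Im (r$j / \<rho> j) \<noteq> Im (r'$j / \<rho> j)" using zj[OF that] ImF by (metis minus_complex.sel(2) right_minus_eq)
          hence "Im (r$j / \<rho> j) = Im (r$j / \<rho> j - r'$j / \<rho> j) / 2" using inQ[OF that] by (intro half_Im) auto
          thus ?thesis using zj[OF that] by simp
        qed
        have x: "Im \<delta> / 2 = pp \<or> Im \<delta> / 2 = -pp" using hj[OF j0] \<rho>0 rj[of j0] by (auto simp: QPSK_iff)
        have "r \<in> B (Im \<delta> / 2)" unfolding B_def FB_def using hj rj by auto
        thus ?thesis using x unfolding Y_def by auto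
      qed
    qed
    have finX: "finite X" and finY: "finite Y" using finA finB by (auto simp: X_def Y_def)
    have cX: "card X = 2 * (H * 2^k)" unfolding X_def
      using card_Un_disjoint[OF finA finA disjA] cA by auto
    have cY: "card Y = 2 * (H * 2^k)" unfolding Y_def
      using card_Un_disjoint[OF finB finB disjB] cB by auto
    have XY: "X \<inter> Y = ((A pp \<inter> B pp) \<union> (A pp \<inter> B (-pp))) \<union> ((A (-pp) \<inter> B pp) \<union> (A (-pp) \<inter> B (-pp)))"
      unfolding X_def Y_def by blast
    have d1: "(A pp \<inter> B pp) \<inter> (A pp \<inter> B (-pp)) = {}" using disjB by blast
    have d2: "(A (-pp) \<inter> B pp) \<inter> (A (-pp) \<inter> B (-pp)) = {}" using disjB by blast
    have d3: "((A pp \<inter> B pp) \<union> (A pp \<inter> B (-pp))) \<inter> ((A (-pp) \<inter> B pp) \<union> (A (-pp) \<inter> B (-pp))) = {}"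
      using disjA by blast
    have fA1: "finite (A pp)" and fA2: "finite (A (-pp))" using finA by auto
    have c1: "card ((A pp \<inter> B pp) \<union> (A pp \<inter> B (-pp))) = 2 * H"
      using card_Un_disjoint[OF finite_Int[OF disjI1[OF fA1]] finite_Int[OF disjI1[OF fA1]] d1] cAB by simp
    have c2: "card ((A (-pp) \<inter> B pp) \<union> (A (-pp) \<inter> B (-pp))) = 2 * H"
      using card_Un_disjoint[OF finite_Int[OF disjI1[OF fA2]] finite_Int[OF disjI1[OF fA2]] d2] cAB by simp
    have cXY: "card (X \<inter> Y) = 4 * H"
      unfolding XY using card_Un_disjoint[OF _ _ d3] fA1 fA2 c1 c2 by simp
    have "card X + card Y = card (X \<union> Y) + card (X \<inter> Y)" using card_Un_Int[OF finX finY] .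
    moreover have "card Bad \<le> card (X \<union> Y)" using sub finX finY by (intro card_mono) auto
    moreover have "2 \<le> (2::nat)^k" using k1 by (metis power_one_right power_increasing_iff one_less_numeral_iff semiring_norm(76))
    ultimately show ?thesis using cX cY cXY by (simp add: algebra_simps) 
  next
    case False
    then obtain j1 where j1: "w$j1 \<noteq> 0" "\<rho> j1 \<notin> UU" by blast
    define F where "F \<delta> j = {q\<in>QPSK. q - \<delta> * \<rho> j \<in> QPSK}" for \<delta> j
    define T where "T \<delta> = {r::complex^'d. \<forall>j. r$j \<in> F \<delta> j}" for \<delta>
    have finF: "\<And>\<delta> j. finite (F \<delta> j)" using finite_QPSK by (simp add: F_def)
    have finT: "finite (T \<delta>)" and cardT: "card (T \<delta>) = (\<Prod>j\<in>UNIV. card (F \<delta> j))" for \<delta>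
      using card_vec_set[of "F \<delta>", OF finF] unfolding T_def by simp_all
    have subT: "Bad \<subseteq> (\<Union>\<delta>\<in>S4 \<union> D4. T \<delta>)"
    proof
      fix r assume rB: "r \<in> Bad"
      hence rQ: "r \<in> QR" and rb: "badrow w r" by (auto simp: Bad_def)
      obtain r' c where r': "r' \<in> QR" and dS: "c * w$j0 \<in> S4 \<union> D4"
        and comp: "\<forall>j. r$j - r'$j = (c * w$j0) * (w$j / w$j0)"
        using bad_char[OF rb j0 rQ] by blast
      have "r \<in> T (c * w$j0)" unfolding T_def F_def
      proof (intro allI CollectI conjI)
        fix j
        show "r$j \<in> QPSK" using rQ by (simp add: QR_def)
        have "r$j - c * w$j0 * \<rho> j = r'$j" using comp by (simp add: \<rho>_def algebra_simps)
        thus "r$j - c * w$j0 * \<rho> j \<in> QPSK" using r' by (simp add: QR_def)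
      qed
      thus "r \<in> (\<Union>\<delta>\<in>S4 \<union> D4. T \<delta>)" using dS by blast
    qed
    have Tb: "2 * card (T \<delta>) \<le> H * 2^k" if d: "\<delta> \<noteq> 0" and j': "w$j' \<noteq> 0" and dD: "\<delta> * \<rho> j' \<in> D4" for \<delta> j'
    proof -
      define g where "g j = (if w$j = 0 then 4 else if j = j' then 1 else (2::nat))" for j
      define g2 where "g2 j = (if w$j = 0 then 4 else (2::nat))" for j
      have le: "card (F \<delta> j) \<le> g j" for j
      proof (cases "w$j = 0")
        case True
        thus ?thesis using \<rho>z[OF True] card_QPSK by (simp add: F_def g_def)
      next
        case wF: False
        show ?thesis
        proof (cases "j = j'")
          case True
          thus ?thesis using cnt1[of "\<delta> * \<rho> j'"] D4_ReIm[OF dD] wF by (simp add: F_def g_def)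
        next
          case False
          thus ?thesis using cnt2[of "\<delta> * \<rho> j"] d \<rho>nz[OF wF] wF by (simp add: F_def g_def)
        qed
      qed
      have "card (T \<delta>) \<le> prod g UNIV" unfolding cardT by (rule prod_mono) (use le in auto)
      moreover have "prod g UNIV = g j' * prod g (UNIV - {j'})" by (simp add: prod.remove)
      moreover have "prod g2 UNIV = g2 j' * prod g2 (UNIV - {j'})" by (simp add: prod.remove)
      moreover have "prod g (UNIV - {j'}) = prod g2 (UNIV - {j'})" by (rule prod.cong) (auto simp: g_def g2_def)
      moreover have "prod g2 UNIV = H * 2^k" using p2 by (simp add: g2_def)
      ultimately show ?thesis using j' by (simp add: g_def g2_def)
    qed
    have key: "\<delta> * \<rho> j1 \<in> D4" if dS: "\<delta> \<in> S4" and Tn: "T \<delta> \<noteq> {}" for \<delta>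
    proof -
      obtain r where "r \<in> T \<delta>" using Tn by blast
      hence q: "r$j1 \<in> QPSK" "r$j1 - \<delta> * \<rho> j1 \<in> QPSK" by (auto simp: T_def F_def)
      have vnz: "\<delta> * \<rho> j1 \<noteq> 0" using S4_nz[OF dS] \<rho>nz[OF j1(1)] by simp
      have "r$j1 - (r$j1 - \<delta> * \<rho> j1) \<in> S4 \<union> D4" using q vnz by (intro diff_class) auto
      hence "\<delta> * \<rho> j1 \<in> S4 \<union> D4" by simp
      moreover have "\<delta> * \<rho> j1 \<notin> S4" using S4_ratio[OF dS] j1(2) by blast
      ultimately show ?thesis by blast
    qed
    have excl: "T \<delta>d = {}" if dS: "\<delta> \<in> S4" and Tn: "T \<delta> \<noteq> {}" and dD: "\<delta>d \<in> D4" for \<delta> \<delta>d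
    proof (rule ccontr)
      assume "T \<delta>d \<noteq> {}"
      then obtain r where "r \<in> T \<delta>d" by blast
      hence q: "r$j1 \<in> QPSK" "r$j1 - \<delta>d * \<rho> j1 \<in> QPSK" by (auto simp: T_def F_def)
      have vnz: "\<delta>d * \<rho> j1 \<noteq> 0" using D4_nz[OF dD] \<rho>nz[OF j1(1)] by simp
      have "r$j1 - (r$j1 - \<delta>d * \<rho> j1) \<in> S4 \<union> D4" using q vnz by (intro diff_class) auto
      hence v2: "(cmod (\<delta>d * \<rho> j1))^2 = 2 \<or> (cmod (\<delta>d * \<rho> j1))^2 = 4" using S4_nsq D4_nsq by auto
      have "(cmod (\<delta> * \<rho> j1))^2 = 4" using D4_nsq[OF key[OF dS Tn]] .
      hence "(cmod \<delta>)^2 * (cmod (\<rho> j1))^2 = 4" by (simp add: norm_mult power_mult_distrib)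
      hence r2: "(cmod (\<rho> j1))^2 = 2" using S4_nsq[OF dS] by simp
      have "(cmod (\<delta>d * \<rho> j1))^2 = (cmod \<delta>d)^2 * (cmod (\<rho> j1))^2" by (simp add: norm_mult power_mult_distrib)
      also have "\<dots> = 8" using r2 D4_nsq[OF dD] by simp
      finally show False using v2 by simp
    qed
    have res: "2 * card Bad \<le> 4 * (H * 2^k)"
    proof (cases "\<exists>\<delta>\<in>S4. T \<delta> \<noteq> {}")
      case True
      then obtain \<delta>0 where "\<delta>0 \<in> S4" "T \<delta>0 \<noteq> {}" by blast
      hence "\<forall>\<delta>d\<in>D4. T \<delta>d = {}" using excl by blast
      hence "Bad \<subseteq> (\<Union>\<delta>\<in>S4. T \<delta>)" using subT by blast
      moreover have "2 * card (T \<delta>) \<le> H * 2^k" if "\<delta> \<in> S4" for \<delta>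
      proof (cases "T \<delta> = {}")
        case False
        show ?thesis using Tb[OF S4_nz[OF that] j1(1) key[OF that False]] .
      qed simp
      ultimately show ?thesis using sum_bound_helper[of Bad T S4] finite_S4 card_S4 finT by blast
    next
      case False
      hence "Bad \<subseteq> (\<Union>\<delta>\<in>D4. T \<delta>)" using subT by blast
      moreover have "2 * card (T \<delta>) \<le> H * 2^k" if "\<delta> \<in> D4" for \<delta>
        using Tb[OF D4_nz[OF that] j0] that \<rho>0 by simp
      ultimately show ?thesis using sum_bound_helper[of Bad T D4] finite_D4 card_D4 finT by blast
    qed
    moreover have "2 \<le> (2::nat)^k" using k1 by (metis power_one_right power_increasing_iff one_less_numeral_iff semiring_norm(76))
    ultimately have "4 * H \<le> 2 * (H * 2^k)" "2 * card Bad \<le> 4 * (H * 2^k)" by simp_all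
    moreover have "4 * 2^k * H = 4 * (H * 2^k)" by simp
    ultimately show ?thesis by linarith
  qed
  thus ?thesis by (simp add: Bad_def H_def k_def)
qed

lemma l0_pos: fixes w :: "complex^'d" assumes "w \<noteq> 0" shows "l0 w \<ge> 1"
proof -
  obtain j0 where j0: "w$j0 \<noteq> 0" using assms by (metis vec_eq_iff zero_index)
  hence "j0 \<in> {j. w$j \<noteq> 0}" by simp
  hence "card {j. w$j \<noteq> 0} \<noteq> 0" by auto
  thus ?thesis unfolding l0_def by (metis One_nat_def Suc_leI neq0_conv)
qed

lemma l0_le: fixes w :: "complex^'d" shows "l0 w \<le> CARD('d)"
  unfolding l0_def by (rule card_mono) auto

lemma row_bound_real:
  fixes w :: "complex^'d"
  assumes w: "w \<noteq> 0"
  shows "real (card {r\<in>QR. badrow w r}) / real (card (QR :: (complex^'d) set))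
          \<le> (2 ^ l0 w - 1) / 4 ^ (l0 w - 1)"
proof -
  define k where "k = l0 w"
  define D where "D = CARD('d)"
  define B where "B = card {r\<in>QR. badrow w r}"
  define H where "H = (4::nat)^(D - k)"
  have k1: "k \<ge> 1" using l0_pos[OF w] by (simp add: k_def)
  have kD: "k \<le> D" using l0_le[of w] by (simp add: k_def D_def)
  have rb: "B + 4 * H \<le> 4 * 2^k * H" using row_bound[OF w] by (simp add: B_def H_def k_def D_def)
  have e: "(D - k) + (k - 1) + 1 = D" using k1 kD by arith
  have "(4::nat)^D = 4^((D - k) + (k - 1) + 1)" using e by simp
  also have "\<dots> = H * 4^(k-1) * 4" by (simp add: power_add H_def)
  finally have e4: "(4::nat)^D = H * 4^(k-1) * 4" .
  have "(B + 4 * H) * 4^(k-1) \<le> (4 * 2^k * H) * 4^(k-1)" using rb by (rule mult_right_mono) simp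
  hence "B * 4^(k-1) + 4^D \<le> 2^k * 4^D" using e4 by (simp add: algebra_simps)
  hence "real B * 4^(k-1) + 4^D \<le> 2^k * 4^D"
    by (metis (mono_tags, lifting) of_nat_add of_nat_le_iff of_nat_mult of_nat_numeral of_nat_power)
  hence ineq: "real B * 4^(k-1) \<le> (2^k - 1) * 4^D" by (simp add: algebra_simps)
  have N: "real (card (QR :: (complex^'d) set)) = 4^D" by (simp add: card_QR D_def)
  have pos: "(0::real) < 4^D" "(0::real) < 4^(k-1)" by simp_all
  have "real B / 4^D \<le> (2^k - 1) / 4^(k-1)"
    using ineq pos by (simp add: divide_le_eq le_divide_eq field_simps)
  thus ?thesis using N by (simp add: B_def k_def)
qed

lemma p_le1: assumes "k \<ge> 1" shows "(2 ^ k - 1) / 4 ^ (k - 1) \<le> (1::real)"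
proof -
  define m :: real where "m = 2^(k-1)"
  have "(2::real)^k = 2 * m" using assms by (simp add: m_def power_eq_if[of 2 k] split: if_splits)
  moreover have "(4::real)^(k-1) = m * m" by (simp add: m_def power_mult_distrib[symmetric])
  moreover have "0 \<le> (m - 1) * (m - 1)" by simp
  moreover have "m \<ge> 1" by (simp add: m_def)
  ultimately show ?thesis by (simp add: divide_le_eq algebra_simps)
qed

theorem theorem2:
  fixes w :: "complex^'d"
  shows "real (card {S \<in> (QPSK_matrices :: (complex^'d^'u) set). eclipsed S w})
           / real (card (QPSK_matrices :: (complex^'d^'u) set))
         \<le> p_e CARD('u) w"
proof -
  define N where "N = card (QR :: (complex^'d) set)"
  have QM: "(QPSK_matrices :: (complex^'d^'u) set) = {S. \<forall>u. S$u \<in> QR}"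
    by (auto simp: QPSK_matrices_def QR_def)
  have finQM: "finite (QPSK_matrices :: (complex^'d^'u) set)"
    and cQM: "card (QPSK_matrices :: (complex^'d^'u) set) = N ^ CARD('u)"
    using card_vec_set[of "\<lambda>_::'u. (QR :: (complex^'d) set)", OF finite_QR] unfolding QM N_def by simp_all
  show ?thesis
  proof (cases "w = 0")
    case True
    have "card {S \<in> (QPSK_matrices :: (complex^'d^'u) set). eclipsed S w} \<le> card (QPSK_matrices :: (complex^'d^'u) set)"
      by (rule card_mono[OF finQM]) auto
    hence "real (card {S \<in> (QPSK_matrices :: (complex^'d^'u) set). eclipsed S w})
           / real (card (QPSK_matrices :: (complex^'d^'u) set)) \<le> 1"
      by (cases "card (QPSK_matrices :: (complex^'d^'u) set) = 0") (auto simp: divide_le_eq_1)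
    thus ?thesis using True by (simp add: p_e_def)
  next
    case False
    define GR where "GR = {r\<in>(QR :: (complex^'d) set). \<not> badrow w r}"
    define B where "B = card {r\<in>(QR :: (complex^'d) set). badrow w r}"
    define G where "G = card GR"
    have finGR: "finite GR" unfolding GR_def by (rule finite_subset[OF _ finite_QR]) auto
    have NBG: "N = B + G"
    proof -
      have "(QR :: (complex^'d) set) = {r\<in>QR. badrow w r} \<union> GR" by (auto simp: GR_def)
      moreover have "{r\<in>(QR :: (complex^'d) set). badrow w r} \<inter> GR = {}" by (auto simp: GR_def)
      moreover have "finite {r\<in>(QR :: (complex^'d) set). badrow w r}" by (rule finite_subset[OF _ finite_QR]) auto
      ultimately show ?thesis unfolding N_def B_def G_def by (metis card_Un_disjoint finGR)
    qed
    define GS where "GS = {S::complex^'d^'u. \<forall>u. S$u \<in> GR}"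
    have cGS: "card GS = G ^ CARD('u)" using card_vec_set[of "\<lambda>_::'u. GR"] finGR by (simp add: GS_def G_def)
    have GSsub: "GS \<subseteq> QPSK_matrices" unfolding QM GS_def GR_def by auto
    have sub: "{S \<in> (QPSK_matrices :: (complex^'d^'u) set). eclipsed S w} \<subseteq> QPSK_matrices - GS"
    proof
      fix S assume S: "S \<in> {S \<in> (QPSK_matrices :: (complex^'d^'u) set). eclipsed S w}"
      then obtain S' where S': "S' \<in> QPSK_matrices" "S' \<noteq> S" "rank (stack_row (S - S') w) \<le> 1"
        by (auto simp: eclipsed_def)
      obtain u where u: "S$u \<noteq> S'$u" using S'(2) by (metis vec_eq_iff)
      obtain c where c: "(S - S')$u = c *s w" using rank_le1_row[OF False S'(3)] by blast
      have S'u: "S'$u \<in> QR" using S'(1) QM by auto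
      have "S$u - S'$u = c *s w" using c by simp
      hence "badrow w (S$u)" unfolding badrow_def using S'u u by metis
      hence "S \<notin> GS" by (auto simp: GS_def GR_def)
      thus "S \<in> QPSK_matrices - GS" using S by auto
    qed
    have "card {S \<in> (QPSK_matrices :: (complex^'d^'u) set). eclipsed S w} \<le> card (QPSK_matrices - GS)"
      by (rule card_mono) (use finQM sub in auto)
    also have "\<dots> = N ^ CARD('u) - G ^ CARD('u)"
      using card_Diff_subset[OF finite_subset[OF GSsub finQM] GSsub] cQM cGS by simp
    finally have c1: "card {S \<in> (QPSK_matrices :: (complex^'d^'u) set). eclipsed S w} \<le> N ^ CARD('u) - G ^ CARD('u)" .
    define p :: real where "p = (2 ^ l0 w - 1) / 4 ^ (l0 w - 1)"
    have Npos: "N > 0" by (simp add: N_def card_QR)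
    have GN: "G \<le> N" using NBG by simp
    have GUN: "G ^ CARD('u) \<le> N ^ CARD('u)" using GN by (rule power_mono) simp
    have bp: "real B / real N \<le> p" using row_bound_real[OF False] by (simp add: B_def N_def p_def)
    have p1: "p \<le> 1" unfolding p_def by (rule p_le1[OF l0_pos[OF False]])
    have GNr: "real G / real N = 1 - real B / real N"
    proof -
      have "real G = real N - real B" using NBG by simp
      hence "real G / real N = (real N - real B) / real N" by simp
      also have "\<dots> = 1 - real B / real N" using Npos by (simp add: diff_divide_distrib)
      finally show ?thesis .
    qed
    have "(1 - p) ^ CARD('u) \<le> (real G / real N) ^ CARD('u)"
      using GNr bp p1 by (intro power_mono) auto
    have "real (card {S \<in> (QPSK_matrices :: (complex^'d^'u) set). eclipsed S w}) / real (card (QPSK_matrices :: (complex^'d^'u) set))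
        \<le> real (N ^ CARD('u) - G ^ CARD('u)) / real (N ^ CARD('u))"
      unfolding cQM by (rule divide_right_mono) (use c1 in simp_all)
    also have "\<dots> = 1 - (real G / real N) ^ CARD('u)"
      using GUN Npos by (simp add: of_nat_diff field_simps power_divide)
    also have "\<dots> \<le> 1 - (1 - p) ^ CARD('u)"
      using \<open>(1 - p) ^ CARD('u) \<le> (real G / real N) ^ CARD('u)\<close> by simp
    finally show ?thesis using False by (simp add: p_e_def p_def)
  qed
qed

end
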